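(* Let $Z$ be a random variable with values in a Polish space $\mathcal{Z}$ and $\mathbb{F}=(\mathcal{F}_t)_{t\ge0}$ a filtration with $\mathcal{F}_t\subset\sigma(Z)$ for all $t\ge0$. If $\tau$ is an $(\mathbb{F}_+,Z)$-randomized stopping time, then there exists a sequence of $(\mathbb{F},Z)$-randomized stopping times $\tau_n$ such that $(Z,\tau_n)\to(Z,\tau)$ in law in $\mathcal{Z}\times[0,\infty]$.
   Context: A random time is a $[0,\infty]$-valued random variable $\tau$; $\mathcal{F}^\tau_t=\sigma(\{\tau\le s\}:s\le t)$. For a filtration $\mathbb{G}$ with $\mathcal{G}_t\subset\sigma(Z)$, $\tau$ is a $(\mathbb{G},Z)$-randomized stopping time if $\mathcal{F}^\tau_t$ is conditionally independent of $Z$ given $\mathcal{G}_t$ for every $t\ge0$, equivalently $\mathbb{P}(\tau\le t\mid Z)=\mathbb{P}(\tau\le t\mid\mathcal{G}_t)$ a.s. for every $t$. $\mathbb{F}_+=(\mathcal{F}_{t+})$ with $\mathcal{F}_{t+}=\bigcap_{s>t}\mathcal{F}_s$. *)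

theory Defs
  imports "HOL-Probability.Probability"
begin

definition sigma_rv :: "'a measure \<Rightarrow> ('a \<Rightarrow> 'z::topological_space) \<Rightarrow> 'a measure" where
  "sigma_rv M Z = vimage_algebra (space M) Z borel"

definition filtration_on :: "'a measure \<Rightarrow> (real \<Rightarrow> 'a measure) \<Rightarrow> bool" where
  "filtration_on M F \<longleftrightarrow>
     (\<forall>t\<ge>0. subalgebra M (F t)) \<and>
     (\<forall>s t. 0 \<le> s \<longrightarrow> s \<le> t \<longrightarrow> sets (F s) \<subseteq> sets (F t))"

text \<open>The right-continuous filtration F_+ with F_{t+} = intersection of F_s over s > t.
  (The intersection of sigma-algebras is a sigma-algebra, so sigma does not enlarge it.)\<close>
definition right_filtration :: "'a measure \<Rightarrow> (real \<Rightarrow> 'a measure) \<Rightarrow> real \<Rightarrow> 'a measure" where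
  "right_filtration M F t = sigma (space M) (\<Inter>s\<in>{t<..}. sets (F s))"

definition randomized_stopping_time ::
    "'a measure \<Rightarrow> (real \<Rightarrow> 'a measure) \<Rightarrow> ('a \<Rightarrow> 'z::topological_space) \<Rightarrow> ('a \<Rightarrow> ennreal) \<Rightarrow> bool" where
  "randomized_stopping_time M G Z \<tau> \<longleftrightarrow>
     \<tau> \<in> borel_measurable M \<and>
     (\<forall>t::real. 0 \<le> t \<longrightarrow>
        (AE \<omega> in M. real_cond_exp M (sigma_rv M Z) (indicator {\<omega>\<in>space M. \<tau> \<omega> \<le> ennreal t}) \<omega>
                   = real_cond_exp M (G t) (indicator {\<omega>\<in>space M. \<tau> \<omega> \<le> ennreal t}) \<omega>))"

definition converges_in_law :: "'a measure \<Rightarrow> (nat \<Rightarrow> 'a \<Rightarrow> 'b::topological_space) \<Rightarrow> ('a \<Rightarrow> 'b) \<Rightarrow> bool" where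
  "converges_in_law M Xs X \<longleftrightarrow>
     (\<forall>f :: 'b \<Rightarrow> real. continuous_on UNIV f \<longrightarrow> bounded (range f) \<longrightarrow>
        (\<lambda>n. \<integral>\<omega>. f (Xs n \<omega>) \<partial>M) \<longlonglongrightarrow> (\<integral>\<omega>. f (X \<omega>) \<partial>M))"

end

theory Submission
  imports Defs
begin

lemma law_part:
  fixes M :: "'a measure" and Z :: "'a \<Rightarrow> 'z::polish_space" and \<tau> :: "'a \<Rightarrow> ennreal"
  assumes P: "prob_space M" and Zm: "Z \<in> borel_measurable M" and tm: "\<tau> \<in> borel_measurable M"
  shows "converges_in_law M (\<lambda>n \<omega>. (Z \<omega>, \<tau> \<omega> + ennreal (1 / Suc n))) (\<lambda>\<omega>. (Z \<omega>, \<tau> \<omega>))"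
  unfolding converges_in_law_def
proof (intro allI impI)
  interpret prob_space M by (rule P)
  fix f :: "'z \<times> ennreal \<Rightarrow> real"
  assume fc: "continuous_on UNIV f" and fb: "bounded (range f)"
  obtain B where B: "\<And>x. norm (f x) \<le> B" using fb unfolding bounded_iff by auto
  have pm: "(\<lambda>\<omega>. (Z \<omega>, g \<omega>::ennreal)) \<in> borel_measurable M" if g: "g \<in> borel_measurable M" for g
  proof -
    have "(\<lambda>\<omega>. (Z \<omega>, g \<omega>)) \<in> measurable M (borel \<Otimes>\<^sub>M borel)" by (rule measurable_Pair[OF Zm g])
    then show ?thesis by (simp only: borel_prod)
  qed
  show "(\<lambda>n. \<integral>\<omega>. f (Z \<omega>, \<tau> \<omega> + ennreal (1 / Suc n)) \<partial>M) \<longlonglongrightarrow> (\<integral>\<omega>. f (Z \<omega>, \<tau> \<omega>) \<partial>M)"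
  proof (rule integral_dominated_convergence[where w="\<lambda>_. B"])
    show "(\<lambda>\<omega>. f (Z \<omega>, \<tau> \<omega>)) \<in> borel_measurable M"
      using borel_measurable_continuous_on[OF fc pm[OF tm]] .
    fix i :: nat
    show "(\<lambda>\<omega>. f (Z \<omega>, \<tau> \<omega> + ennreal (1 / Suc i))) \<in> borel_measurable M"
      by (rule borel_measurable_continuous_on[OF fc pm]) (intro borel_measurable_add tm borel_measurable_const)
    show "AE x in M. norm (f (Z x, \<tau> x + ennreal (1 / Suc i))) \<le> B" using B by (intro AE_I2) simp
  next
    show "integrable M (\<lambda>_. B)" by simp
    show "AE x in M. (\<lambda>i. f (Z x, \<tau> x + ennreal (1 / Suc i))) \<longlonglongrightarrow> f (Z x, \<tau> x)"
    proof (rule AE_I2)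
      fix x
      have "(\<lambda>i. ennreal (1 / Suc i)) \<longlonglongrightarrow> ennreal 0"
        using tendsto_ennrealI[OF LIMSEQ_inverse_real_of_nat] by (simp add: inverse_eq_divide)
      then have "(\<lambda>i. \<tau> x + ennreal (1 / Suc i)) \<longlonglongrightarrow> \<tau> x + 0"
        by (intro tendsto_add tendsto_const) simp
      then have "(\<lambda>i. (Z x, \<tau> x + ennreal (1 / Suc i))) \<longlonglongrightarrow> (Z x, \<tau> x)"
        by (intro tendsto_Pair tendsto_const) simp
      moreover have "isCont f (Z x, \<tau> x)" using fc continuous_on_eq_continuous_at by blast
      ultimately show "(\<lambda>i. f (Z x, \<tau> x + ennreal (1 / Suc i))) \<longlonglongrightarrow> f (Z x, \<tau> x)"
        using isCont_tendsto_compose by blast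
    qed
  qed
qed

lemma sfs:
  assumes "prob_space M" "subalgebra M X"
  shows "sigma_finite_subalgebra M X"
proof -
  interpret prob_space M by (rule assms(1))
  have "finite_measure_subalgebra M X"
    unfolding finite_measure_subalgebra_def finite_measure_subalgebra_axioms_def
    using assms(2) finite_measure_axioms by simp
  then show ?thesis by (rule finite_measure_subalgebra_is_sigma_finite)
qed

lemma sigma_rv_subalg:
  assumes "Z \<in> borel_measurable M"
  shows "subalgebra M (sigma_rv M Z)"
proof -
  have "sets (sigma_rv M Z) = {Z -` A \<inter> space M |A. A \<in> sets borel}"
    unfolding sigma_rv_def by (rule sets_vimage_algebra2) simp
  also have "\<dots> \<subseteq> sets M" using measurable_sets[OF assms] by auto
  finally show ?thesis unfolding subalgebra_def sigma_rv_def by simp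
qed

lemma right_filtration_sub:
  assumes FF: "filtration_on M F" and s: "0 \<le> s" "s < t"
  shows "sets (right_filtration M F s) \<subseteq> sets (F t)" "space (right_filtration M F s) = space M"
proof -
  have subt: "subalgebra M (F t)" using FF s unfolding filtration_on_def by auto
  let ?X = "\<Inter>s'\<in>{s<..}. sets (F s')"
  have X1: "?X \<subseteq> sets (F t)" using s by auto
  also have "\<dots> \<subseteq> sets M" using subt unfolding subalgebra_def by auto
  finally have X2: "?X \<subseteq> Pow (space M)" using sets.sets_into_space by blast
  have "sets (right_filtration M F s) = sigma_sets (space M) ?X"
    unfolding right_filtration_def using X2 by (rule sets_measure_of)
  also have "\<dots> \<subseteq> sets (F t)"
    using sets.sigma_sets_subset[OF X1] subt unfolding subalgebra_def by simp
  finally show "sets (right_filtration M F s) \<subseteq> sets (F t)" .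
  show "space (right_filtration M F s) = space M"
    unfolding right_filtration_def using X2 by (rule space_measure_of)
qed

theorem lemma4p6:
  fixes M :: "'a measure" and Z :: "'a \<Rightarrow> 'z::polish_space"
    and F :: "real \<Rightarrow> 'a measure" and \<tau> :: "'a \<Rightarrow> ennreal"
  assumes "prob_space M"
    and "Z \<in> borel_measurable M"
    and "filtration_on M F"
    and "\<And>t. 0 \<le> t \<Longrightarrow> sets (F t) \<subseteq> sets (sigma_rv M Z)"
    and "randomized_stopping_time M (right_filtration M F) Z \<tau>"
  shows "\<exists>\<tau>s :: nat \<Rightarrow> 'a \<Rightarrow> ennreal.
           (\<forall>n. randomized_stopping_time M F Z (\<tau>s n)) \<and>
           converges_in_law M (\<lambda>n \<omega>. (Z \<omega>, \<tau>s n \<omega>)) (\<lambda>\<omega>. (Z \<omega>, \<tau> \<omega>))"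
proof -
  note P = assms(1) and Zm = assms(2) and FF = assms(3) and FZ = assms(4) and R = assms(5)
  interpret prob_space M by (rule P)
  have tm: "\<tau> \<in> borel_measurable M" using R unfolding randomized_stopping_time_def by auto
  have hyp: "AE \<omega> in M. real_cond_exp M (sigma_rv M Z) (indicator {\<omega>\<in>space M. \<tau> \<omega> \<le> ennreal s}) \<omega>
                   = real_cond_exp M (right_filtration M F s) (indicator {\<omega>\<in>space M. \<tau> \<omega> \<le> ennreal s}) \<omega>"
    if "0 \<le> s" for s using R that unfolding randomized_stopping_time_def by auto
  define S where "S = sigma_rv M Z"
  have SZ: "subalgebra M S" unfolding S_def by (rule sigma_rv_subalg[OF Zm])
  interpret S: sigma_finite_subalgebra M S by (rule sfs[OF P SZ])
  have subF: "subalgebra M (F t)" if "0 \<le> t" for t using FF that unfolding filtration_on_def by auto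
  have subSF: "subalgebra S (F t)" if "0 \<le> t" for t
    using FZ[OF that] subF[OF that] SZ unfolding subalgebra_def S_def by auto
  have main: "randomized_stopping_time M F Z (\<lambda>\<omega>. \<tau> \<omega> + ennreal (1 / Suc n))" for n
    unfolding randomized_stopping_time_def
  proof (intro conjI allI impI)
    show "(\<lambda>\<omega>. \<tau> \<omega> + ennreal (1 / Suc n)) \<in> borel_measurable M"
      by (intro borel_measurable_add tm borel_measurable_const)
    fix t :: real assume t0: "0 \<le> t"
    define e :: real where "e = 1 / Suc n"
    have e0: "0 < e" unfolding e_def by simp
    interpret Ft: sigma_finite_subalgebra M "F t" by (rule sfs[OF P subF[OF t0]])
    show "AE \<omega> in M. real_cond_exp M (sigma_rv M Z) (indicator {\<omega> \<in> space M. \<tau> \<omega> + ennreal (1 / Suc n) \<le> ennreal t}) \<omega> =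
                real_cond_exp M (F t) (indicator {\<omega> \<in> space M. \<tau> \<omega> + ennreal (1 / Suc n) \<le> ennreal t}) \<omega>"
    proof (cases "t < e")
      case True
      have E: "{\<omega> \<in> space M. \<tau> \<omega> + ennreal (1 / Suc n) \<le> ennreal t} = {}"
      proof safe
        fix \<omega> assume "\<tau> \<omega> + ennreal (1 / Suc n) \<le> ennreal t"
        moreover have "ennreal e \<le> \<tau> \<omega> + ennreal e" by simp
        moreover have "ennreal t < ennreal e" using True t0 by (simp add: ennreal_lessI)
        ultimately show "\<omega> \<in> {}" unfolding e_def by (meson leD order.trans)
      qed
      then have ind: "indicator {\<omega> \<in> space M. \<tau> \<omega> + ennreal (1 / Suc n) \<le> ennreal t} = (\<lambda>_. 0::real)"
        by (simp only: E) (simp add: fun_eq_iff)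
      have "AE \<omega> in M. real_cond_exp M S (\<lambda>_. 0::real) \<omega> = 0"
        by (rule S.real_cond_exp_F_meas) auto
      moreover have "AE \<omega> in M. real_cond_exp M (F t) (\<lambda>_. 0::real) \<omega> = 0"
        by (rule Ft.real_cond_exp_F_meas) auto
      ultimately show ?thesis unfolding ind S_def[symmetric] by eventually_elim simp
    next
      case False
      define s where "s = t - e"
      have s0: "0 \<le> s" and st: "s < t" using False e0 unfolding s_def by auto
      have Aeq: "{\<omega> \<in> space M. \<tau> \<omega> + ennreal (1 / Suc n) \<le> ennreal t} = {\<omega> \<in> space M. \<tau> \<omega> \<le> ennreal s}"
      proof -
        have "\<tau> \<omega> + ennreal e \<le> ennreal t \<longleftrightarrow> \<tau> \<omega> \<le> ennreal s" for \<omega>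
        proof (cases "\<tau> \<omega>")
          case (real r)
          then show ?thesis using e0 s0 t0 unfolding s_def
            by (simp add: ennreal_plus[symmetric] del: ennreal_plus) linarith
        qed (simp add: top_unique)
        then show ?thesis unfolding e_def by auto
      qed
      define A where "A = {\<omega> \<in> space M. \<tau> \<omega> \<le> ennreal s}"
      have Am: "A \<in> sets M" unfolding A_def using tm by measurable
      define f :: "'a \<Rightarrow> real" where "f = indicator A"
      have fi: "integrable M f" unfolding f_def using Am by (intro integrable_real_indicator) (auto simp: less_top[symmetric])
      define G where "G = right_filtration M F s"
      have GF: "sets G \<subseteq> sets (F t)" "space G = space M"
        using right_filtration_sub[OF FF s0 st] unfolding G_def by auto
      have subFG: "subalgebra (F t) G"
        using GF subF[OF t0] unfolding subalgebra_def by auto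
      have subG: "subalgebra M G"
        using GF subF[OF t0] unfolding subalgebra_def by auto
      interpret G: sigma_finite_subalgebra M G by (rule sfs[OF P subG])
      have h1: "AE \<omega> in M. real_cond_exp M (F t) (real_cond_exp M S f) \<omega> = real_cond_exp M (F t) f \<omega>"
        by (rule Ft.real_cond_exp_nested_subalg[OF SZ subSF[OF t0] fi])
      have h2: "AE \<omega> in M. real_cond_exp M S f \<omega> = real_cond_exp M G f \<omega>"
        using hyp[OF s0] unfolding S_def G_def f_def A_def .
      have h3: "AE \<omega> in M. real_cond_exp M (F t) (real_cond_exp M S f) \<omega> = real_cond_exp M (F t) (real_cond_exp M G f) \<omega>"
        by (rule Ft.real_cond_exp_cong[OF h2 borel_measurable_cond_exp2 borel_measurable_cond_exp2])
      have h4: "AE \<omega> in M. real_cond_exp M (F t) (real_cond_exp M G f) \<omega> = real_cond_exp M G f \<omega>"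
        by (rule Ft.real_cond_exp_F_meas[OF G.real_cond_exp_int(1)[OF fi]
              measurable_from_subalg[OF subFG borel_measurable_cond_exp]])
      have "AE \<omega> in M. real_cond_exp M S f \<omega> = real_cond_exp M (F t) f \<omega>"
        using h1 h2 h3 h4 by auto
      then show ?thesis unfolding Aeq S_def f_def A_def .
    qed
  qed
  show ?thesis
    by (rule exI[where x="\<lambda>n \<omega>. \<tau> \<omega> + ennreal (1 / Suc n)"]) (use main law_part[OF P Zm tm] in auto)
qed

end
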